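(* Let $C$ be an independent set of the Kneser graph of flags of type $\{2,3\}$ of $\mathrm{PG}(6,q)$, let $H$ be a hyperplane and $P$ a point of $\mathrm{PG}(6,q)$. (i) Let $\mathcal{E}$ be the set of planes $E$ of $H$ for which there is a solid $S$ with $(E,S)\in C$ and $E=H\cap S$. Then $E\cap E'\neq\emptyset$ for all $E,E'\in\mathcal{E}$, i.e. $\mathcal{E}$ is an independent set of the Kneser graph of planes of $H$; hence $|\mathcal{E}|\le\begin{bmatrix}5\\2\end{bmatrix}_q$. (ii) Let $\mathcal{S}$ be the set of solids $S$ for which there is a flag $(E,S)\in C$ with $P\in S\setminus E$. Then $|\mathcal{S}|\le\begin{bmatrix}5\\2\end{bmatrix}_q$.
   Context: Dimensions are projective (planes 2, solids 3, hyperplanes 5). A flag of type $\{2,3\}$ is a pair $(E,S)$ of a plane $E$ and a solid $S$ with $E\subseteq S$; in the Kneser graph distinct flags $(E,S),(E',S')$ are adjacent iff $E\cap S'=\emptyset$ and $E'\cap S=\emptyset$. The Kneser graph of planes of $H$ has planes of $H$ as vertices, adjacent iff disjoint. $\begin{bmatrix}5\\2\end{bmatrix}_q=\frac{(q^5-1)(q^4-1)}{(q^2-1)(q-1)}$. *)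

theory Defs
  imports "HOL-Analysis.Analysis"
begin

text \<open>PG(6,q) is modelled as the lattice of subspaces of the 7-dimensional
vector space 'a^7 over a finite field 'a with q = CARD('a) elements.
A projective subspace of projective dimension k is a vector subspace of
(vector) dimension k+1.  Projective disjointness = intersection is {0}.\<close>

definition proj_sub :: "nat \<Rightarrow> ('a::field ^ 7) set \<Rightarrow> bool" where
  "proj_sub k U \<longleftrightarrow> vec.subspace U \<and> vec.dim U = k + 1"

abbreviation is_point :: "('a::field ^ 7) set \<Rightarrow> bool" where "is_point U \<equiv> proj_sub 0 U"
abbreviation is_plane :: "('a::field ^ 7) set \<Rightarrow> bool" where "is_plane U \<equiv> proj_sub 2 U"
abbreviation is_solid :: "('a::field ^ 7) set \<Rightarrow> bool" where "is_solid U \<equiv> proj_sub 3 U"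
abbreviation is_hyperplane :: "('a::field ^ 7) set \<Rightarrow> bool" where "is_hyperplane U \<equiv> proj_sub 5 U"

definition proj_disjoint :: "('a::field ^ 7) set \<Rightarrow> ('a ^ 7) set \<Rightarrow> bool" where
  "proj_disjoint U W \<longleftrightarrow> U \<inter> W = {0}"

definition flag23 :: "('a::field ^ 7) set \<times> ('a ^ 7) set \<Rightarrow> bool" where
  "flag23 F \<longleftrightarrow> is_plane (fst F) \<and> is_solid (snd F) \<and> fst F \<subseteq> snd F"

definition kneser_flag_adj ::
  "('a::field ^ 7) set \<times> ('a ^ 7) set \<Rightarrow> ('a ^ 7) set \<times> ('a ^ 7) set \<Rightarrow> bool" where
  "kneser_flag_adj F F' \<longleftrightarrow> F \<noteq> F' \<and>
     proj_disjoint (fst F) (snd F') \<and> proj_disjoint (fst F') (snd F)"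

definition indep_flag_set :: "(('a::field ^ 7) set \<times> ('a ^ 7) set) set \<Rightarrow> bool" where
  "indep_flag_set C \<longleftrightarrow> (\<forall>F\<in>C. flag23 F) \<and> (\<forall>F\<in>C. \<forall>F'\<in>C. \<not> kneser_flag_adj F F')"

definition gauss_5_2 :: "nat \<Rightarrow> real" where
  "gauss_5_2 q = ((real q ^ 5 - 1) * (real q ^ 4 - 1)) / ((real q ^ 2 - 1) * (real q - 1))"

end

theory Submission
  imports Defs "HOL-Computational_Algebra.Polynomial_Factorial"
begin

lemma deg1_root:
  fixes p :: "'a::field poly"
  assumes "degree p = 1"
  shows "\<exists>x. poly p x = 0"
proof -
  have p: "p = [:coeff p 0, coeff p 1:]"
    by (rule poly_eqI) (use assms in \<open>auto simp: coeff_pCons coeff_eq_0 split: nat.splits\<close>)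
  have "p \<noteq> 0" using assms by auto
  then have "coeff p (degree p) \<noteq> 0" by simp
  then have "coeff p 1 \<noteq> 0" using assms by simp
  then have "poly p (- coeff p 0 / coeff p 1) = 0"
    by (subst p) (simp add: field_simps)
  then show ?thesis by blast
qed

lemma no_root_cubic_irreducible:
  fixes m :: "'a::field poly"
  assumes d: "degree m = 3" and nr: "\<And>x. poly m x \<noteq> 0"
  shows "irreducible m"
proof (rule irreducibleI)
  show "m \<noteq> 0" using d by auto
  show "\<not> is_unit m" using d by (subst is_unit_iff_degree) auto
  fix a b assume mab: "m = a * b"
  show "is_unit a \<or> is_unit b"
  proof (rule ccontr)
    assume nu: "\<not> (is_unit a \<or> is_unit b)"
    have a0: "a \<noteq> 0" and b0: "b \<noteq> 0" using mab d by auto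
    have da: "degree a \<noteq> 0" using nu a0 by (simp add: is_unit_iff_degree)
    have db: "degree b \<noteq> 0" using nu b0 by (simp add: is_unit_iff_degree)
    have "degree a + degree b = 3" using mab a0 b0 d by (simp add: degree_mult_eq)
    then have "degree a = 1 \<or> degree b = 1" using da db by arith
    then obtain x where "poly a x = 0 \<or> poly b x = 0" using deg1_root by blast
    then have "poly m x = 0" using mab by auto
    with nr show False by blast
  qed
qed

lemma exists_prime_cubic:
  "\<exists>f :: 'a::{field,finite} poly. degree f = 3 \<and> prime_elem f"
proof -
  define R where "R = (\<lambda>(r::'a,u::'a,v::'a). [:-r,1:] * [:v,u,1:])"
  define M where "M = (\<lambda>(a::'a,b::'a,c::'a). [:c,b,a,1:])"
  have "R (0,-1,0) = R (1,0,0)" unfolding R_def by simp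
  moreover have "(0::'a,-1::'a,0::'a) \<noteq> (1,0,0)" by simp
  ultimately have ninj: "\<not> inj R" unfolding inj_def by blast
  have "card (range R) < card (UNIV :: ('a\<times>'a\<times>'a) set)"
  proof -
    have "card (range R) \<le> card (UNIV :: ('a\<times>'a\<times>'a) set)" by (rule card_image_le) simp
    moreover have "card (range R) \<noteq> card (UNIV :: ('a\<times>'a\<times>'a) set)"
      using ninj inj_on_iff_eq_card[of "UNIV :: ('a\<times>'a\<times>'a) set" R] by simp
    ultimately show ?thesis by simp
  qed
  moreover have "inj M" unfolding M_def inj_def by auto
  then have "card (range M) = card (UNIV :: ('a\<times>'a\<times>'a) set)" by (simp add: card_image)
  ultimately have "\<not> range M \<subseteq> range R"
  proof (intro notI)
    assume a1: "card (range R) < CARD('a \<times> 'a \<times> 'a)" and a2: "card (range M) = CARD('a \<times> 'a \<times> 'a)"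
      and "range M \<subseteq> range R"
    then have "card (range M) \<le> card (range R)" by (intro card_mono finite_imageI) simp_all
    then show False using a1 a2 by linarith
  qed
  then obtain a b c where nm: "M (a,b,c) \<notin> range R" by auto
  define m where "m = M (a,b,c)"
  have dm: "degree m = 3" unfolding m_def M_def by simp
  have nr: "poly m x \<noteq> 0" for x
  proof
    assume "poly m x = 0"
    then obtain g where g: "m = [:-x,1:] * g" by (auto simp: poly_eq_0_iff_dvd)
    have g0: "g \<noteq> 0" using g dm by auto
    have "degree ([:-x,1:] * g) = degree [:-x,1:] + degree g" by (rule degree_mult_eq) (use g0 in auto)
    then have dg: "degree g = 2" using g dm by simp
    have "lead_coeff m = 1" unfolding m_def M_def by simp
    moreover have "lead_coeff m = lead_coeff g" unfolding g lead_coeff_mult by simp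
    ultimately have lg: "coeff g 2 = 1" using dg by simp
    have gform: "g = [:coeff g 0, coeff g 1, 1:]"
      by (rule poly_eqI) (use dg lg in \<open>auto simp: coeff_pCons coeff_eq_0 numeral_2_eq_2 split: nat.splits\<close>)
    have "R (x, coeff g 1, coeff g 0) = [:-x,1:] * [:coeff g 0, coeff g 1, 1:]" by (simp add: R_def)
    also have "\<dots> = m" using gform g by metis
    finally have "m = R (x, coeff g 1, coeff g 0)" by simp
    with nm show False unfolding m_def by auto
  qed
  have "irreducible m" by (rule no_root_cubic_irreducible[OF dm nr])
  then show ?thesis using dm field_poly_irreducible_imp_prime by blast
qed

definition lc :: "(nat \<Rightarrow> 'a::field) \<Rightarrow> (nat \<Rightarrow> 'a ^ 'n) \<Rightarrow> nat \<Rightarrow> 'a ^ 'n" where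
  "lc c b k = (\<Sum>i<k. c i *s b i)"
definition indep :: "(nat \<Rightarrow> 'a::field ^ 'n) \<Rightarrow> nat \<Rightarrow> bool" where
  "indep b k \<longleftrightarrow> (\<forall>c. lc c b k = 0 \<longrightarrow> (\<forall>i<k. c i = 0))"
definition lsp :: "(nat \<Rightarrow> 'a::field ^ 'n) \<Rightarrow> nat \<Rightarrow> ('a ^ 'n) set" where
  "lsp b k = range (\<lambda>c. lc c b k)"
definition Tup :: "(nat \<Rightarrow> ('a::field ^ 'n) set) \<Rightarrow> nat \<Rightarrow> (nat \<Rightarrow> 'a ^ 'n) set" where
  "Tup U k = {b. (\<forall>i\<ge>k. b i = 0) \<and> indep b k \<and> (\<forall>i<k. b i \<in> U i)}"

lemma lc_cong: "(\<And>i. i<k \<Longrightarrow> b i = b' i) \<Longrightarrow> (\<And>i. i<k \<Longrightarrow> c i = c' i) \<Longrightarrow> lc c b k = lc c' b' k"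
  unfolding lc_def by (rule sum.cong) auto

lemma lc_diff: "lc c b k - lc d b k = lc (\<lambda>i. c i - d i) b k"
  unfolding lc_def by (simp add: sum_subtractf vec.scale_left_diff_distrib)

lemma lc_Suc: "lc c b (Suc k) = lc c b k + c k *s b k"
  unfolding lc_def by simp

lemma card_lsp:
  fixes b :: "nat \<Rightarrow> 'a::{field,finite} ^ 'n"
  assumes "indep b k"
  shows "card (lsp b k) = CARD('a) ^ k"
proof -
  have eq: "lsp b k = (\<lambda>c. lc c b k) ` ({..<k} \<rightarrow>\<^sub>E (UNIV::'a set))"
  proof
    show "lsp b k \<subseteq> (\<lambda>c. lc c b k) ` ({..<k} \<rightarrow>\<^sub>E UNIV)"
    proof
      fix x assume "x \<in> lsp b k"
      then obtain c where x: "x = lc c b k" unfolding lsp_def by auto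
      have "lc c b k = lc (restrict c {..<k}) b k" by (rule lc_cong) auto
      then show "x \<in> (\<lambda>c. lc c b k) ` ({..<k} \<rightarrow>\<^sub>E UNIV)" using x by force
    qed
  qed (auto simp: lsp_def)
  have inj: "inj_on (\<lambda>c. lc c b k) ({..<k} \<rightarrow>\<^sub>E (UNIV::'a set))"
  proof (rule inj_onI)
    fix c d assume c: "c \<in> {..<k} \<rightarrow>\<^sub>E (UNIV::'a set)" and d: "d \<in> {..<k} \<rightarrow>\<^sub>E (UNIV::'a set)"
      and e: "lc c b k = lc d b k"
    have "lc (\<lambda>i. c i - d i) b k = 0" using e lc_diff[of c b k d] by simp
    then have "\<forall>i<k. c i - d i = 0" using assms unfolding indep_def by blast
    then show "c = d" using c d by (intro PiE_ext[OF c d]) auto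
  qed
  show ?thesis unfolding eq card_image[OF inj] by (simp add: card_PiE)
qed

lemma indep_ext:
  assumes "indep b k"
  shows "indep (b(k:=v)) (Suc k) \<longleftrightarrow> v \<notin> lsp b k"
proof
  assume i: "indep (b(k:=v)) (Suc k)"
  show "v \<notin> lsp b k"
  proof
    assume "v \<in> lsp b k"
    then obtain c where v: "v = lc c b k" unfolding lsp_def by auto
    define d where "d = c(k := -1)"
    have "lc d (b(k:=v)) k = lc c b k" unfolding d_def by (rule lc_cong) auto
    then have "lc d (b(k:=v)) (Suc k) = lc c b k + (-1) *s v"
      unfolding lc_Suc by (simp add: d_def)
    also have "\<dots> = 0" using v by simp
    finally have "d k = 0" using i unfolding indep_def by blast
    then show False unfolding d_def by simp
  qed
next
  assume nv: "v \<notin> lsp b k"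
  show "indep (b(k:=v)) (Suc k)"
    unfolding indep_def
  proof (rule allI, rule impI)
    fix c assume c: "lc c (b(k:=v)) (Suc k) = 0"
    have l: "lc c (b(k:=v)) k = lc c b k" by (rule lc_cong) auto
    have ck: "c k = 0"
    proof (rule ccontr)
      assume ck: "c k \<noteq> 0"
      have "lc c b k + c k *s v = 0" using c l unfolding lc_Suc by simp
      then have "c k *s v = - lc c b k" by (simp add: eq_neg_iff_add_eq_0 add.commute)
      then have "inverse (c k) *s (c k *s v) = (- inverse (c k)) *s lc c b k" by simp
      then have "v = (- inverse (c k)) *s lc c b k"
        using ck by (simp add: vec.scale_scale)
      also have "\<dots> = lc (\<lambda>i. - inverse (c k) * c i) b k"
        unfolding lc_def by (simp add: vec.scale_sum_right)
      finally have "v \<in> lsp b k" unfolding lsp_def by auto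
      with nv show False by blast
    qed
    have "lc c b k = 0" using c l ck unfolding lc_Suc by simp
    then have "\<forall>i<k. c i = 0" using assms unfolding indep_def by blast
    with ck show "\<forall>i<Suc k. c i = 0" using less_Suc_eq by auto
  qed
qed

lemma indep_cong: assumes "\<And>i. i<k \<Longrightarrow> b i = b' i" shows "indep b k \<longleftrightarrow> indep b' k"
proof -
  have "lc c b k = lc c b' k" for c by (rule lc_cong) (use assms in auto)
  then show ?thesis unfolding indep_def by simp
qed

lemma indep_Suc: "indep b (Suc k) \<Longrightarrow> indep b k"
  unfolding indep_def
proof (rule allI, rule impI)
  fix c assume i: "\<forall>c. lc c b (Suc k) = 0 \<longrightarrow> (\<forall>i<Suc k. c i = 0)" and c: "lc c b k = 0"
  have "lc (c(k:=0)) b k = lc c b k" by (rule lc_cong) auto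
  then have "lc (c(k:=0)) b (Suc k) = lc c b k" unfolding lc_Suc by simp
  then have h: "\<forall>i<Suc k. (c(k:=0)) i = 0" using i c by presburger
  show "\<forall>i<k. c i = 0"
  proof (intro allI impI)
    fix i assume "i < k"
    then have "i < Suc k" "i \<noteq> k" by auto
    then have "(c(k:=0)) i = 0" "i \<noteq> k" using h by blast+
    then show "c i = 0" by simp
  qed
qed

lemma lsp_sub:
  assumes "vec.subspace U" "\<And>i. i<k \<Longrightarrow> b i \<in> U"
  shows "lsp b k \<subseteq> U"
  unfolding lsp_def lc_def using assms by (auto intro!: vec.subspace_sum vec.subspace_scale)

lemma finite_Tup: "finite (Tup U k :: (nat \<Rightarrow> 'a::{field,finite} ^ 'n) set)"
proof -
  have "Tup U k \<subseteq> {b. \<forall>x. (x \<in> {..<k} \<longrightarrow> b x \<in> UNIV) \<and> (x \<notin> {..<k} \<longrightarrow> b x = 0)}"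
    unfolding Tup_def by auto
  moreover have "finite {b :: nat \<Rightarrow> 'a ^ 'n. \<forall>x. (x \<in> {..<k} \<longrightarrow> b x \<in> UNIV) \<and> (x \<notin> {..<k} \<longrightarrow> b x = 0)}"
    by (rule finite_set_of_finite_funs) auto
  ultimately show ?thesis by (rule finite_subset)
qed

lemma card_Tup:
  fixes U :: "nat \<Rightarrow> ('a::{field,finite} ^ 'n) set"
  assumes mono: "\<And>i j. i \<le> j \<Longrightarrow> j < K \<Longrightarrow> U i \<subseteq> U j"
    and sub: "\<And>i. i < K \<Longrightarrow> vec.subspace (U i)"
  shows "k \<le> K \<Longrightarrow> card (Tup U k) = (\<Prod>i<k. card (U i) - CARD('a) ^ i)"
proof (induction k)
  case 0
  have "Tup U 0 = {\<lambda>_. 0}" unfolding Tup_def indep_def by auto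
  then show ?case by simp
next
  case (Suc k)
  then have kK: "k < K" by simp
  define F where "F = (\<lambda>(b::nat \<Rightarrow> 'a^'n, v::'a^'n). b(k:=v))"
  have eq: "Tup U (Suc k) = F ` (SIGMA b:Tup U k. U k - lsp b k)"
  proof
    show "F ` (SIGMA b:Tup U k. U k - lsp b k) \<subseteq> Tup U (Suc k)"
    proof
      fix x assume "x \<in> F ` (SIGMA b:Tup U k. U k - lsp b k)"
      then obtain b v where x: "x = b(k:=v)" and b: "b \<in> Tup U k" and v: "v \<in> U k" "v \<notin> lsp b k"
        unfolding F_def by auto
      have "indep x (Suc k)" using indep_ext[of b k v] b v x unfolding Tup_def by auto
      moreover have "\<forall>i<Suc k. x i \<in> U i" using b v x unfolding Tup_def using less_Suc_eq by auto
      ultimately show "x \<in> Tup U (Suc k)" using b x unfolding Tup_def by auto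
    qed
  next
    show "Tup U (Suc k) \<subseteq> F ` (SIGMA b:Tup U k. U k - lsp b k)"
    proof
      fix x assume x: "x \<in> Tup U (Suc k)"
      define b where "b = x(k:=0)"
      have ib: "indep b k" using indep_Suc[of x k] indep_cong[of k b x] x unfolding Tup_def b_def by auto
      have bT: "b \<in> Tup U k" using x ib unfolding Tup_def b_def by auto
      have "x = b(k := x k)" unfolding b_def by simp
      moreover have "x k \<notin> lsp b k" using indep_ext[OF ib, of "x k"] x \<open>x = b(k := x k)\<close>
        unfolding Tup_def by auto
      moreover have "x k \<in> U k" using x unfolding Tup_def by auto
      ultimately show "x \<in> F ` (SIGMA b:Tup U k. U k - lsp b k)"
        unfolding F_def using bT by (intro image_eqI[of _ _ "(b, x k)"]) auto
    qed
  qed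
  have inj: "inj_on F (SIGMA b:Tup U k. U k - lsp b k)"
  proof (rule inj_onI)
    fix p p' assume p: "p \<in> (SIGMA b:Tup U k. U k - lsp b k)" and p': "p' \<in> (SIGMA b:Tup U k. U k - lsp b k)"
      and e: "F p = F p'"
    obtain b v where pv: "p = (b, v)" by force
    obtain b' v' where pv': "p' = (b', v')" by force
    have "b k = 0" "b' k = 0" using p p' pv pv' unfolding Tup_def by auto
    moreover have e2: "b(k:=v) = b'(k:=v')" using e unfolding pv pv' F_def by simp
    ultimately have "b = b'"
    proof (intro ext)
      fix i assume "b k = 0" "b' k = 0"
      show "b i = b' i"
      proof (cases "i = k")
        case False then show ?thesis using fun_cong[OF e2, of i] by simp
      qed (use \<open>b k = 0\<close> \<open>b' k = 0\<close> in simp)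
    qed
    moreover have "v = v'" using fun_cong[OF e2, of k] by simp
    ultimately show "p = p'" using pv pv' by simp
  qed
  have "card (Tup U (Suc k)) = card (SIGMA b:Tup U k. U k - lsp b k)"
    unfolding eq by (rule card_image[OF inj])
  also have "\<dots> = (\<Sum>b\<in>Tup U k. card (U k - lsp b k))"
    by (rule card_SigmaI) (auto simp: finite_Tup)
  also have "\<dots> = (\<Sum>b\<in>Tup U k. card (U k) - CARD('a) ^ k)"
  proof (rule sum.cong)
    fix b assume b: "b \<in> Tup U k"
    have "b i \<in> U k" if "i<k" for i using b mono[of i k] kK that unfolding Tup_def by auto
    then have "lsp b k \<subseteq> U k"
      by (intro lsp_sub sub[OF kK])
    then show "card (U k - lsp b k) = card (U k) - CARD('a) ^ k"
      using card_lsp[of b k] b by (simp add: card_Diff_subset Tup_def)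
  qed simp
  also have "\<dots> = card (Tup U k) * (card (U k) - CARD('a) ^ k)" by simp
  also have "\<dots> = (\<Prod>i<Suc k. card (U i) - CARD('a) ^ i)" using Suc by simp
  finally show ?case .
qed

lemma card_subspace:
  assumes "vec.subspace (U :: ('a::{field,finite} ^ 'n) set)"
  shows "card U = CARD('a) ^ vec.dim U"
proof -
  obtain B where B: "B \<subseteq> U" "vec.independent B" "U \<subseteq> vec.span B" "card B = vec.dim U"
    using vec.basis_exists by blast
  have fB: "finite B" by simp
  have "vec.span B = U" by (rule vec.span_subspace) (use B assms in auto)
  then have U: "U = range (\<lambda>u. \<Sum>v\<in>B. u v *s v)" using vec.span_finite[OF fB] by simp
  have eq: "U = (\<lambda>u. \<Sum>v\<in>B. u v *s v) ` (B \<rightarrow>\<^sub>E (UNIV::'a set))"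
  proof
    show "U \<subseteq> (\<lambda>u. \<Sum>v\<in>B. u v *s v) ` (B \<rightarrow>\<^sub>E UNIV)"
    proof
      fix x assume "x \<in> U"
      then obtain u where x: "x = (\<Sum>v\<in>B. u v *s v)" using U by blast
      have "x = (\<Sum>v\<in>B. restrict u B v *s v)" unfolding x by (rule sum.cong) auto
      moreover have "restrict u B \<in> B \<rightarrow>\<^sub>E UNIV" by simp
      ultimately show "x \<in> (\<lambda>u. \<Sum>v\<in>B. u v *s v) ` (B \<rightarrow>\<^sub>E UNIV)" by (rule image_eqI)
    qed
  next
    show "(\<lambda>u. \<Sum>v\<in>B. u v *s v) ` (B \<rightarrow>\<^sub>E UNIV) \<subseteq> U"
      by (subst U) (rule image_subsetI, rule rangeI)
  qed
  have inj: "inj_on (\<lambda>u. \<Sum>v\<in>B. u v *s v) (B \<rightarrow>\<^sub>E (UNIV::'a set))"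
  proof (rule inj_onI)
    fix c d assume c: "c \<in> B \<rightarrow>\<^sub>E (UNIV::'a set)" and d: "d \<in> B \<rightarrow>\<^sub>E (UNIV::'a set)"
      and e: "(\<Sum>v\<in>B. c v *s v) = (\<Sum>v\<in>B. d v *s v)"
    have "(\<Sum>v\<in>B. (c v - d v) *s v) = (\<Sum>v\<in>B. c v *s v) - (\<Sum>v\<in>B. d v *s v)"
      by (simp only: vec.scale_left_diff_distrib sum_subtractf)
    then have "(\<Sum>v\<in>B. (c v - d v) *s v) = 0" using e by simp
    moreover have ie: "\<forall>c. (\<Sum>v\<in>B. c v *s v) = 0 \<longrightarrow> (\<forall>v\<in>B. c v = 0)"
      using B(2) vec.independent_explicit by blast
    ultimately have "\<forall>v\<in>B. c v - d v = 0" using ie[rule_format, of "\<lambda>v. c v - d v"] by blast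
    then show "c = d" by (intro PiE_ext[OF c d]) auto
  qed
  have "card U = card (B \<rightarrow>\<^sub>E (UNIV::'a set))" by (subst eq) (rule card_image[OF inj])
  also have "\<dots> = CARD('a) ^ card B" by (simp add: card_PiE)
  finally show ?thesis using B(4) by simp
qed

definition P3 :: "'a::field poly set" where "P3 = {X. degree X < 3}"

definition psi :: "(nat \<Rightarrow> 'a::field ^ 'n) \<Rightarrow> 'a poly \<Rightarrow> 'a poly \<Rightarrow> 'a ^ 'n" where
  "psi b X Y = coeff X 0 *s b 0 + coeff X 1 *s b 1 + coeff X 2 *s b 2
             + coeff Y 0 *s b 3 + coeff Y 1 *s b 4 + coeff Y 2 *s b 5"

lemma P3_form: "X \<in> P3 \<Longrightarrow> X = [:coeff X 0, coeff X 1, coeff X 2:]"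
  unfolding P3_def
  by (rule poly_eqI) (auto simp: coeff_pCons coeff_eq_0 numeral_2_eq_2 split: nat.splits)

lemma P3_pCons: "[:a, b, c:] \<in> P3"
proof -
  have "degree [:a, b, c:] \<le> 2" by (rule degree_le) (auto simp: coeff_pCons split: nat.splits)
  then show ?thesis unfolding P3_def by simp
qed

lemma P3_add: "X \<in> P3 \<Longrightarrow> Y \<in> P3 \<Longrightarrow> X + Y \<in> P3"
  unfolding P3_def using degree_add_le_max[of X Y] by auto
lemma P3_minus: "X \<in> P3 \<Longrightarrow> - X \<in> P3"
  unfolding P3_def by simp
lemma P3_diff: "X \<in> P3 \<Longrightarrow> Y \<in> P3 \<Longrightarrow> X - Y \<in> P3"
  unfolding P3_def using degree_diff_le[of X 2 Y] by auto
lemma P3_0: "0 \<in> P3" unfolding P3_def by simp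
lemma P3_monom: "i < 3 \<Longrightarrow> monom 1 i \<in> P3" unfolding P3_def by (simp add: degree_monom_eq)
lemma P3_mod: "degree f = 3 \<Longrightarrow> X mod f \<in> P3"
  unfolding P3_def using degree_mod_less[of f X] by fastforce

lemma P3_dvd: assumes "degree f = 3" "X \<in> P3" "f dvd X" shows "X = 0"
proof (rule ccontr)
  assume "X \<noteq> 0"
  then have "degree f \<le> degree X" using assms(3) by (rule dvd_imp_degree_le[rotated])
  with assms(1,2) show False unfolding P3_def by simp
qed

lemma card_P3: "card (P3 :: 'a::{field,finite} poly set) = CARD('a) ^ 3"
proof -
  have eq: "P3 = (\<lambda>(a::'a,b,c). [:a,b,c:]) ` UNIV"
  proof
    show "P3 \<subseteq> (\<lambda>(a::'a,b,c). [:a,b,c:]) ` UNIV"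
    proof
      fix X :: "'a poly" assume "X \<in> P3"
      then have "X = (\<lambda>(a::'a,b,c). [:a,b,c:]) (coeff X 0, coeff X 1, coeff X 2)" using P3_form by simp
      then show "X \<in> (\<lambda>(a::'a,b,c). [:a,b,c:]) ` UNIV" by blast
    qed
  qed (auto simp: P3_pCons)
  have "inj (\<lambda>(a::'a,b::'a,c::'a). [:a,b,c:])" unfolding inj_def by auto
  then have "card ((\<lambda>(a::'a,b::'a,c::'a). [:a,b,c:]) ` UNIV) = card (UNIV :: ('a\<times>'a\<times>'a) set)"
    by (rule card_image)
  then have "card (P3 :: 'a poly set) = card (UNIV :: ('a\<times>'a\<times>'a) set)" using eq by simp
  then show ?thesis by (simp add: power3_eq_cube)
qed

lemma psi_add: "psi b (X + X') (Y + Y') = psi b X Y + psi b X' Y'"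
  unfolding psi_def by (simp add: vec.scale_left_distrib algebra_simps)
lemma psi_diff: "psi b (X - X') (Y - Y') = psi b X Y - psi b X' Y'"
  unfolding psi_def by (simp add: vec.scale_left_diff_distrib algebra_simps)
lemma psi_smult: "psi b (smult a X) (smult a Y) = a *s psi b X Y"
  unfolding psi_def by (simp add: vec.scale_right_distrib vec.scale_scale)
lemma psi_0: "psi b 0 0 = 0"
  unfolding psi_def by simp

lemma lc6: "lc c b 6 = psi b [:c 0, c 1, c 2:] [:c 3, c 4, c 5:]"
  unfolding lc_def psi_def by (simp add: eval_nat_numeral add.assoc)

lemma indep_psi:
  "indep b 6 \<longleftrightarrow> (\<forall>X\<in>P3. \<forall>Y\<in>P3. psi b X Y = 0 \<longrightarrow> X = 0 \<and> Y = 0)"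
proof
  assume i: "indep b 6"
  show "\<forall>X\<in>P3. \<forall>Y\<in>P3. psi b X Y = 0 \<longrightarrow> X = 0 \<and> Y = 0"
  proof (intro ballI impI)
    fix X Y :: "'a poly" assume X: "X \<in> P3" and Y: "Y \<in> P3" and z: "psi b X Y = 0"
    define c where "c = (\<lambda>i. if i < 3 then coeff X i else coeff Y (i - 3))"
    have "lc c b 6 = psi b X Y" unfolding lc6 c_def
      by (subst (3) P3_form[OF X], subst (3) P3_form[OF Y]) (simp add: psi_def)
    then have "\<forall>i<6. c i = 0" using i z unfolding indep_def by metis
    then have "c 0 = 0" "c 1 = 0" "c 2 = 0" "c 3 = 0" "c 4 = 0" "c 5 = 0" by auto
    then show "X = 0 \<and> Y = 0" unfolding c_def
      by (subst P3_form[OF X], subst P3_form[OF Y]) simp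
  qed
next
  assume h: "\<forall>X\<in>P3. \<forall>Y\<in>P3. psi b X Y = 0 \<longrightarrow> X = 0 \<and> Y = 0"
  show "indep b 6" unfolding indep_def
  proof (rule allI, rule impI)
    fix c assume "lc c b 6 = 0"
    then have "[:c 0, c 1, c 2:] = 0 \<and> [:c 3, c 4, c 5:] = 0" using h P3_pCons unfolding lc6 by blast
    then have z: "c 0 = 0" "c 1 = 0" "c 2 = 0" "c 3 = 0" "c 4 = 0" "c 5 = 0" by auto
    show "\<forall>i<6. c i = 0"
    proof (intro allI impI)
      fix i :: nat assume "i < 6"
      then have "i = 0 \<or> i = 1 \<or> i = 2 \<or> i = 3 \<or> i = 4 \<or> i = 5" by auto
      then show "c i = 0" using z by auto
    qed
  qed
qed

lemma psi_inj:
  assumes "indep b 6" "X \<in> P3" "Y \<in> P3" "X' \<in> P3" "Y' \<in> P3" "psi b X Y = psi b X' Y'"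
  shows "X = X' \<and> Y = Y'"
proof -
  have "psi b (X - X') (Y - Y') = 0" using assms(6) by (simp add: psi_diff)
  then have "X - X' = 0 \<and> Y - Y' = 0" using assms(1-5) P3_diff unfolding indep_psi by blast
  then show ?thesis by simp
qed

definition Spr :: "'a::field poly \<Rightarrow> (nat \<Rightarrow> 'a ^ 'n) \<Rightarrow> 'a poly \<Rightarrow> ('a ^ 'n) set" where
  "Spr f b g = (\<lambda>X. psi b X ((g * X) mod f)) ` P3"
definition Sinf :: "(nat \<Rightarrow> 'a::field ^ 'n) \<Rightarrow> ('a ^ 'n) set" where
  "Sinf b = (\<lambda>Y. psi b 0 Y) ` P3"
definition tau :: "'a::field poly \<Rightarrow> 'a poly \<Rightarrow> (nat \<Rightarrow> 'a ^ 'n) \<Rightarrow> nat \<Rightarrow> 'a ^ 'n" where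
  "tau f g b = (\<lambda>i. if i < 3 then psi b (monom 1 i) ((g * monom 1 i) mod f) else b i)"
definition sig :: "(nat \<Rightarrow> 'a::field ^ 'n) \<Rightarrow> nat \<Rightarrow> 'a ^ 'n" where
  "sig b = (\<lambda>i. if i < 3 then b (i + 3) else if i < 6 then b (i - 3) else 0)"

lemma S1:
  assumes f: "degree f = 3" "prime_elem f" and i: "indep b 6" and g: "g \<in> P3" "g' \<in> P3" "g \<noteq> g'"
    and v: "v \<in> Spr f b g" "v \<in> Spr f b g'"
  shows "v = 0"
proof -
  obtain X where X: "X \<in> P3" "v = psi b X ((g * X) mod f)" using v(1) unfolding Spr_def by auto
  obtain X' where X': "X' \<in> P3" "v = psi b X' ((g' * X') mod f)" using v(2) unfolding Spr_def by auto
  have "X = X' \<and> (g * X) mod f = (g' * X') mod f"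
    by (rule psi_inj[OF i X(1) P3_mod[OF f(1)] X'(1) P3_mod[OF f(1)]]) (use X X' in simp)
  then have e: "X' = X" "(g * X) mod f = (g' * X) mod f" by auto
  have "((g - g') * X) mod f = 0" using e by (simp add: left_diff_distrib poly_mod_diff_left)
  then have "f dvd (g - g') * X" by (simp add: dvd_eq_mod_eq_0)
  then have "f dvd (g - g') \<or> f dvd X" using f(2) by (simp add: prime_elem_dvd_mult_iff)
  then have "g - g' = 0 \<or> X = 0" using P3_dvd[OF f(1)] P3_diff[OF g(1,2)] X(1) by blast
  then have "X = 0" using g(3) by simp
  then show ?thesis using X(2) psi_0 by simp
qed

lemma S2:
  assumes f: "degree f = 3" and i: "indep b 6" and g: "g \<in> P3"
    and v: "v \<in> Spr f b g" "v \<in> Sinf b"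
  shows "v = 0"
proof -
  obtain X where X: "X \<in> P3" "v = psi b X ((g * X) mod f)" using v(1) unfolding Spr_def by auto
  obtain Y where Y: "Y \<in> P3" "v = psi b 0 Y" using v(2) unfolding Sinf_def by auto
  have "X = 0 \<and> (g * X) mod f = Y"
    by (rule psi_inj[OF i X(1) P3_mod[OF f(1)] P3_0 Y(1)]) (use X Y in simp)
  then show ?thesis using X(2) psi_0 by simp
qed

lemma X_monoms: "X \<in> P3 \<Longrightarrow> X = smult (coeff X 0) (monom 1 0) + smult (coeff X 1) (monom 1 1) + smult (coeff X 2) (monom 1 2)"
  by (subst P3_form, assumption) (simp add: monom_0 monom_Suc eval_nat_numeral)

lemma psi_monom: "i < 3 \<Longrightarrow> psi b (monom 1 i) 0 = b i"
proof -
  assume "i < 3"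
  then have "i = 0 \<or> i = 1 \<or> i = 2" by auto
  then show ?thesis by (auto simp: psi_def coeff_monom)
qed

lemma T1:
  assumes X: "X \<in> P3"
  shows "psi (tau f g b) X Y = psi b X ((g * X) mod f + Y)"
proof -
  define m where "m = (\<lambda>i. (g * monom 1 i) mod f)"
  have gX: "(g * X) mod f = smult (coeff X 0) (m 0) + smult (coeff X 1) (m 1) + smult (coeff X 2) (m 2)"
    unfolding m_def
    by (subst X_monoms[OF X]) (simp only: distrib_left mult_smult_right poly_mod_add_left mod_smult_left)
  have t: "tau f g b 0 = psi b (monom 1 0) (m 0)" "tau f g b 1 = psi b (monom 1 1) (m 1)"
    "tau f g b 2 = psi b (monom 1 2) (m 2)" "tau f g b 3 = b 3" "tau f g b 4 = b 4" "tau f g b 5 = b 5"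
    unfolding tau_def m_def by simp_all
  show ?thesis
    unfolding gX
    apply (subst psi_def)
    apply (simp only: t)
    apply (simp add: psi_def coeff_monom vec.scale_left_distrib vec.scale_right_distrib vec.scale_scale algebra_simps)
    done
qed

lemma tau_inv: "tau f (- g) (tau f g b) = b"
proof
  fix i
  show "tau f (- g) (tau f g b) i = b i"
  proof (cases "i < 3")
    case True
    have "tau f (- g) (tau f g b) i = psi (tau f g b) (monom 1 i) (((- g) * monom 1 i) mod f)"
      using True unfolding tau_def[of f "- g"] by simp
    also have "\<dots> = psi b (monom 1 i) ((g * monom 1 i) mod f + ((- g) * monom 1 i) mod f)"
      by (rule T1[OF P3_monom[OF True]])
    also have "\<dots> = psi b (monom 1 i) 0" by simp
    also have "\<dots> = b i" using psi_monom[OF True] .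
    finally show ?thesis .
  qed (simp add: tau_def)
qed

lemma psi_in:
  assumes "vec.subspace H" "\<And>i. i < 6 \<Longrightarrow> b i \<in> H"
  shows "psi b X Y \<in> H"
  unfolding psi_def using assms
  by (intro vec.subspace_add vec.subspace_scale) auto

lemma tau_Tup:
  assumes f: "degree f = 3" and H: "vec.subspace H" and b: "b \<in> Tup (\<lambda>_. H) 6"
  shows "tau f g b \<in> Tup (\<lambda>_. H) 6"
proof -
  have bH: "\<And>i. i < 6 \<Longrightarrow> b i \<in> H" and b0: "\<forall>i\<ge>6. b i = 0" and ib: "indep b 6"
    using b unfolding Tup_def by auto
  have "\<forall>i\<ge>6. tau f g b i = 0" using b0 unfolding tau_def by simp
  moreover have "\<forall>i<6. tau f g b i \<in> H" using bH psi_in[OF H bH] unfolding tau_def by simp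
  moreover have "indep (tau f g b) 6"
    unfolding indep_psi
  proof (intro ballI impI)
    fix X Y :: "'a poly" assume X: "X \<in> P3" and Y: "Y \<in> P3" and z: "psi (tau f g b) X Y = 0"
    have "psi b X ((g * X) mod f + Y) = psi b 0 0" using z T1[OF X] psi_0 by metis
    then have "X = 0 \<and> (g * X) mod f + Y = 0"
      using psi_inj[OF ib X P3_add[OF P3_mod[OF f] Y] P3_0 P3_0] by blast
    then have "X = 0" "(g * X) mod f + Y = 0" by auto
    moreover from this(1) have "(g * X) mod f = 0" by simp
    ultimately show "X = 0 \<and> Y = 0" by simp
  qed
  ultimately show ?thesis unfolding Tup_def by auto
qed

lemma Spr_tau: "Spr f (tau f g b) 0 = Spr f b g"
  unfolding Spr_def by (rule image_cong) (auto simp: T1)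

lemma psi_sig: "psi (sig b) X Y = psi b Y X"
  unfolding psi_def sig_def by (simp add: algebra_simps)

lemma sig_sig: "\<forall>i\<ge>6. b i = 0 \<Longrightarrow> sig (sig b) = b"
  unfolding sig_def by (rule ext) auto

lemma sig_Tup:
  assumes b: "b \<in> Tup (\<lambda>_. H) 6"
  shows "sig b \<in> Tup (\<lambda>_. H) 6"
proof -
  have bH: "\<And>i. i < 6 \<Longrightarrow> b i \<in> H" and ib: "indep b 6"
    using b unfolding Tup_def by auto
  have "\<forall>i\<ge>6. sig b i = 0" unfolding sig_def by simp
  moreover have "\<forall>i<6. sig b i \<in> H" using bH unfolding sig_def by auto
  moreover have "indep (sig b) 6"
    using ib unfolding indep_psi psi_sig by blast
  ultimately show ?thesis unfolding Tup_def by auto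
qed

lemma Spr_sig: "Spr f (sig b) 0 = Sinf b"
  unfolding Spr_def Sinf_def by (simp add: psi_sig)

definition c0 :: "nat \<Rightarrow> nat" where
  "c0 q = (q^3 - 1) * (q^3 - q) * (q^3 - q^2) * (q^6 - q^3) * (q^6 - q^4) * (q^6 - q^5)"

definition Kf :: "'a::field poly \<Rightarrow> (nat \<Rightarrow> 'a ^ 'n) \<Rightarrow> ('a ^ 'n) set set" where
  "Kf f b = Spr f b ` P3 \<union> {Sinf b}"

lemma card_field_ge2: "2 \<le> CARD('a::{field,finite})"
proof -
  have "card {0::'a, 1} = 2" by simp
  moreover have "card {0::'a, 1} \<le> CARD('a)" by (rule card_mono) auto
  ultimately show ?thesis by simp
qed

lemma nonzero_elem:
  fixes E :: "('a::{field,finite} ^ 'n) set"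
  assumes "card E = CARD('a) ^ 3"
  shows "\<exists>v\<in>E. v \<noteq> 0"
proof (rule ccontr)
  assume "\<not> (\<exists>v\<in>E. v \<noteq> 0)"
  then have "E \<subseteq> {0}" by auto
  then have "card E \<le> 1" using card_mono[of "{0}" E] by simp
  moreover have "2 ^ 3 \<le> CARD('a) ^ 3" using card_field_ge2[where 'a='a] by (rule power_mono) simp
  ultimately show False using assms by simp
qed

lemma fiber0:
  fixes H E :: "('a::{field,finite} ^ 'n) set"
  assumes f: "degree f = 3" and H: "vec.subspace H" and E: "vec.subspace E" and EH: "E \<subseteq> H"
    and cE: "card E = CARD('a) ^ 3"
  shows "{b \<in> Tup (\<lambda>_. H) 6. Spr f b 0 = E} = Tup (\<lambda>i. if i < 3 then E else H) 6"
proof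
  show "{b \<in> Tup (\<lambda>_. H) 6. Spr f b 0 = E} \<subseteq> Tup (\<lambda>i. if i < 3 then E else H) 6"
  proof
    fix b assume b: "b \<in> {b \<in> Tup (\<lambda>_. H) 6. Spr f b 0 = E}"
    have "b i \<in> E" if i: "i < 3" for i
    proof -
      have "psi b (monom 1 i) ((0 * monom 1 i) mod f) \<in> Spr f b 0"
        unfolding Spr_def using P3_monom[OF i] by blast
      then have "psi b (monom 1 i) 0 \<in> E" using b by simp
      moreover have "psi b (monom 1 i) 0 = b i" by (rule psi_monom[OF i])
      ultimately show ?thesis by simp
    qed
    then show "b \<in> Tup (\<lambda>i. if i < 3 then E else H) 6" using b unfolding Tup_def by auto
  qed
next
  show "Tup (\<lambda>i. if i < 3 then E else H) 6 \<subseteq> {b \<in> Tup (\<lambda>_. H) 6. Spr f b 0 = E}"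
  proof
    fix b assume b: "b \<in> Tup (\<lambda>i. if i < 3 then E else H) 6"
    have bE: "b i \<in> E" if "i < 3" for i
    proof -
      have "i < 6" using that by simp
      then have "b i \<in> (if i < 3 then E else H)" using b unfolding Tup_def by blast
      then show ?thesis using that by simp
    qed
    have ib: "indep b 6" using b unfolding Tup_def by auto
    have bB: "b \<in> Tup (\<lambda>_. H) 6" using b EH unfolding Tup_def by (auto split: if_splits)
    have sub: "Spr f b 0 \<subseteq> E"
    proof
      fix v assume "v \<in> Spr f b 0"
      then obtain X where "v = psi b X 0" unfolding Spr_def by auto
      then show "v \<in> E" unfolding psi_def using bE E
        by (simp add: vec.subspace_add vec.subspace_scale)
    qed
    have inj: "inj_on (\<lambda>X. psi b X ((0 * X) mod f)) P3"
      by (rule inj_onI) (use psi_inj[OF ib _ P3_0 _ P3_0] in simp)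
    have "card (Spr f b 0) = card (P3 :: 'a poly set)" unfolding Spr_def by (rule card_image[OF inj])
    then have "card (Spr f b 0) = card E" using cE card_P3 by simp
    then have "Spr f b 0 = E" using sub by (intro card_subset_eq) auto
    then show "b \<in> {b \<in> Tup (\<lambda>_. H) 6. Spr f b 0 = E}" using bB by simp
  qed
qed

lemma card_c0:
  fixes H E :: "('a::{field,finite} ^ 'n) set"
  assumes H: "vec.subspace H" and E: "vec.subspace E" and EH: "E \<subseteq> H"
    and cE: "card E = CARD('a) ^ 3" and cH: "card H = CARD('a) ^ 6"
  shows "card (Tup (\<lambda>i. if i < 3 then E else H) 6) = c0 CARD('a)"
proof -
  have "card (Tup (\<lambda>i. if i < 3 then E else H) 6) = (\<Prod>i<6. card (if i < 3 then E else H) - CARD('a) ^ i)"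
    by (rule card_Tup[where K=6]) (use H E EH in auto)
  also have "\<dots> = c0 CARD('a)" unfolding c0_def using cE cH by (simp add: eval_nat_numeral)
  finally show ?thesis .
qed

lemma card_Bases:
  fixes H :: "('a::{field,finite} ^ 'n) set"
  assumes H: "vec.subspace H" and cH: "card H = CARD('a) ^ 6"
  shows "card (Tup (\<lambda>_. H) 6) = (\<Prod>i<6. CARD('a) ^ 6 - CARD('a) ^ i)"
proof -
  have "card (Tup (\<lambda>_. H) 6) = (\<Prod>i<6. card H - CARD('a) ^ i)"
    by (rule card_Tup[where K=6]) (use H in auto)
  then show ?thesis using cH by simp
qed

lemma finite_P3: "finite (P3 :: 'a::{field,finite} poly set)"
  using card_P3[where 'a='a] card_field_ge2[where 'a='a] by (intro card_ge_0_finite) simp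

lemma fiber_card:
  fixes H E :: "('a::{field,finite} ^ 'n) set"
  assumes f: "degree f = 3" "prime_elem f" and H: "vec.subspace H" and E: "vec.subspace E" and EH: "E \<subseteq> H"
    and cE: "card E = CARD('a) ^ 3" and cH: "card H = CARD('a) ^ 6"
  shows "card {b \<in> Tup (\<lambda>_. H) 6. E \<in> Kf f b} = (CARD('a) ^ 3 + 1) * c0 CARD('a)"
proof -
  define Bs where "Bs = Tup (\<lambda>_. H) 6"
  define A where "A = (\<lambda>g. {b \<in> Bs. Spr f b g = E})"
  define Ai where "Ai = {b \<in> Bs. Sinf b = E}"
  obtain v where v: "v \<in> E" "v \<noteq> 0" using nonzero_elem[OF cE] by blast
  have fin: "finite (A g)" for g unfolding A_def Bs_def by (rule finite_subset[OF _ finite_Tup]) auto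
  have finAi: "finite Ai" unfolding Ai_def Bs_def by (rule finite_subset[OF _ finite_Tup]) auto
  have A0: "card (A 0) = c0 CARD('a)"
    unfolding A_def Bs_def fiber0[OF f(1) H E EH cE] by (rule card_c0[OF H E EH cE cH])
  have Ag: "card (A g) = c0 CARD('a)" if g: "g \<in> P3" for g
  proof -
    have "bij_betw (tau f g) (A g) (A 0)"
    proof (rule bij_betw_byWitness[where f' = "tau f (- g)"])
      show "\<forall>a\<in>A g. tau f (- g) (tau f g a) = a" by (simp add: tau_inv)
      show "\<forall>a\<in>A 0. tau f g (tau f (- g) a) = a"
      proof
        fix a assume "a \<in> A 0"
        show "tau f g (tau f (- g) a) = a" using tau_inv[of f "- g" a] by simp
      qed
      show "tau f g ` A g \<subseteq> A 0"
        unfolding A_def Bs_def using tau_Tup[OF f(1) H] by (auto simp: Spr_tau)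
      show "tau f (- g) ` A 0 \<subseteq> A g"
      proof
        fix x assume "x \<in> tau f (- g) ` A 0"
        then obtain b where b: "b \<in> A 0" "x = tau f (- g) b" by auto
        have "Spr f x g = Spr f (tau f g x) 0" by (simp add: Spr_tau)
        also have "tau f g x = b" using b(2) tau_inv[of f "- g" b] by simp
        finally have "Spr f x g = E" using b(1) unfolding A_def by simp
        moreover have "x \<in> Bs" using b tau_Tup[OF f(1) H] unfolding A_def Bs_def by auto
        ultimately show "x \<in> A g" unfolding A_def by simp
      qed
    qed
    then have "card (A g) = card (A 0)" by (rule bij_betw_same_card)
    then show ?thesis using A0 by simp
  qed
  have AI: "card Ai = c0 CARD('a)"
  proof -
    have "bij_betw sig Ai (A 0)"
    proof (rule bij_betw_byWitness[where f' = sig])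
      show "\<forall>a\<in>Ai. sig (sig a) = a" unfolding Ai_def Bs_def Tup_def by (auto intro: sig_sig)
      show "\<forall>a\<in>A 0. sig (sig a) = a" unfolding A_def Bs_def Tup_def by (auto intro: sig_sig)
      show "sig ` Ai \<subseteq> A 0" unfolding Ai_def A_def Bs_def by (auto simp: Spr_sig sig_Tup)
      show "sig ` A 0 \<subseteq> Ai"
      proof
        fix x assume "x \<in> sig ` A 0"
        then obtain b where b: "b \<in> A 0" "x = sig b" by auto
        have bz: "\<forall>i\<ge>6. b i = 0" using b(1) unfolding A_def Bs_def Tup_def by auto
        have "Sinf x = Spr f (sig x) 0" by (simp add: Spr_sig)
        also have "sig x = b" using b(2) sig_sig[OF bz] by simp
        finally have "Sinf x = E" using b(1) unfolding A_def by simp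
        moreover have "x \<in> Bs" using b sig_Tup unfolding A_def Bs_def by auto
        ultimately show "x \<in> Ai" unfolding Ai_def by simp
      qed
    qed
    then have "card Ai = card (A 0)" by (rule bij_betw_same_card)
    then show ?thesis using A0 by simp
  qed
  have eq: "{b \<in> Bs. E \<in> Kf f b} = (\<Union>g\<in>P3. A g) \<union> Ai"
    unfolding Kf_def A_def Ai_def by auto
  have disj: "\<forall>g\<in>P3. \<forall>h\<in>P3. g \<noteq> h \<longrightarrow> A g \<inter> A h = {}"
  proof (intro ballI impI)
    fix g h :: "'a poly" assume g: "g \<in> P3" and h: "h \<in> P3" and gh: "g \<noteq> h"
    show "A g \<inter> A h = {}"
    proof (rule ccontr)
      assume "A g \<inter> A h \<noteq> {}"
      then obtain b where "b \<in> A g" "b \<in> A h" by auto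
      then have "Spr f b g = E" "Spr f b h = E" "indep b 6" unfolding A_def Bs_def Tup_def by auto
      then have "v = 0" using S1[OF f _ g h gh, of b v] v by simp
      with v show False by simp
    qed
  qed
  have disj2: "(\<Union>g\<in>P3. A g) \<inter> Ai = {}"
  proof (rule ccontr)
    assume "(\<Union>g\<in>P3. A g) \<inter> Ai \<noteq> {}"
    then obtain b g where "g \<in> P3" "b \<in> A g" "b \<in> Ai" by auto
    then have "Spr f b g = E" "Sinf b = E" "indep b 6" "g \<in> P3" unfolding A_def Ai_def Bs_def Tup_def by auto
    then have "v = 0" using S2[OF f(1), of b g v] v by simp
    with v show False by simp
  qed
  have "card {b \<in> Bs. E \<in> Kf f b} = card (\<Union>g\<in>P3. A g) + card Ai"
    unfolding eq by (rule card_Un_disjoint) (use fin finAi finite_P3 disj2 in auto)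
  also have "card (\<Union>g\<in>P3. A g) = (\<Sum>g\<in>P3. card (A g))"
    by (rule card_UN_disjoint) (use fin finite_P3 disj in auto)
  also have "\<dots> = (\<Sum>g\<in>(P3::'a poly set). c0 CARD('a))" by (rule sum.cong) (use Ag in auto)
  also have "\<dots> = CARD('a) ^ 3 * c0 CARD('a)" by (simp add: card_P3)
  finally show ?thesis unfolding Bs_def using AI by (simp add: algebra_simps)
qed

lemma at_most_one:
  fixes H :: "('a::{field,finite} ^ 'n) set"
  assumes f: "degree f = 3" "prime_elem f" and b: "b \<in> Tup (\<lambda>_. H) 6"
    and sub: "\<forall>E\<in>F. vec.subspace E" and FF: "\<forall>E\<in>F. \<forall>E'\<in>F. E \<inter> E' \<noteq> {0}"
  shows "card {E \<in> F. E \<in> Kf f b} \<le> 1"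
proof -
  have ib: "indep b 6" using b unfolding Tup_def by auto
  have fin: "finite {E \<in> F. E \<in> Kf f b}" by (rule finite)
  have "E1 = E2" if E1: "E1 \<in> F" "E1 \<in> Kf f b" and E2: "E2 \<in> F" "E2 \<in> Kf f b" for E1 E2
  proof (rule ccontr)
    assume ne: "E1 \<noteq> E2"
    have "0 \<in> E1 \<inter> E2" using sub E1 E2 vec.subspace_0 by auto
    then obtain v where v: "v \<in> E1" "v \<in> E2" "v \<noteq> 0" using FF E1 E2 by blast
    consider (a) g1 g2 where "g1 \<in> P3" "g2 \<in> P3" "E1 = Spr f b g1" "E2 = Spr f b g2"
      | (b) g1 where "g1 \<in> P3" "E1 = Spr f b g1" "E2 = Sinf b"
      | (c) g2 where "g2 \<in> P3" "E2 = Spr f b g2" "E1 = Sinf b"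
      | (d) "E1 = Sinf b" "E2 = Sinf b"
      using E1(2) E2(2) unfolding Kf_def by blast
    then show False
    proof cases
      case a
      then have "g1 \<noteq> g2" using ne by auto
      then have "v = 0" using S1[OF f ib a(1,2)] a v by blast
      then show False using v by simp
    next
      case b
      then have "v = 0" using S2[OF f(1) ib b(1)] v by blast
      then show False using v by simp
    next
      case c
      then have "v = 0" using S2[OF f(1) ib c(1)] v by blast
      then show False using v by simp
    next
      case d
      then show False using ne by simp
    qed
  qed
  then show ?thesis using card_le_Suc0_iff_eq[OF fin] by auto
qed

lemma double_count:
  assumes "finite A" "finite B"
  shows "(\<Sum>a\<in>A. card {b\<in>B. P a b}) = (\<Sum>b\<in>B. card {a\<in>A. P a b})"
proof -
  have c1: "card {b\<in>B. P a b} = (\<Sum>b\<in>B. if P a b then 1 else 0)" for a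
    using assms(2) by (simp add: sum.If_cases Int_def)
  have c2: "card {a\<in>A. P a b} = (\<Sum>a\<in>A. if P a b then 1 else 0)" for b
    using assms(1) by (simp add: sum.If_cases Int_def)
  show ?thesis unfolding c1 c2 by (rule sum.swap)
qed

lemma real_pow_diff:
  assumes "b \<le> a" "1 \<le> q"
  shows "real (q ^ a - q ^ b) = real q ^ a - real q ^ b"
  using assms by (simp add: of_nat_diff power_increasing)

lemma gauss_identity:
  assumes q: "2 \<le> q"
  shows "gauss_5_2 q * ((real q^3 + 1) * ((real q^3 - 1) * (real q^3 - real q) * (real q^3 - real q^2) * (real q^6 - real q^3) * (real q^6 - real q^4) * (real q^6 - real q^5)))
       = (real q^6 - 1) * (real q^6 - real q) * (real q^6 - real q^2) * (real q^6 - real q^3) * (real q^6 - real q^4) * (real q^6 - real q^5)"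
proof -
  define Q where "Q = real q"
  have Q: "Q \<ge> 2" using q unfolding Q_def by simp
  have d1: "Q^2 - 1 \<noteq> 0"
  proof -
    have "Q^2 \<ge> 2^2" using Q by (intro power_mono) auto
    then show ?thesis by simp
  qed
  have d2: "Q - 1 \<noteq> 0" using Q by simp
  have key: "(Q^5 - 1) * (Q^4 - 1) * ((Q^3 + 1) * ((Q^3 - 1) * (Q^3 - Q) * (Q^3 - Q^2) * (Q^6 - Q^3) * (Q^6 - Q^4) * (Q^6 - Q^5)))
     = ((Q^6 - 1) * (Q^6 - Q) * (Q^6 - Q^2) * (Q^6 - Q^3) * (Q^6 - Q^4) * (Q^6 - Q^5)) * ((Q^2 - 1) * (Q - 1))"
    by algebra
  define D where "D = (Q^2 - 1) * (Q - 1)"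
  define X where "X = (Q^3 + 1) * ((Q^3 - 1) * (Q^3 - Q) * (Q^3 - Q^2) * (Q^6 - Q^3) * (Q^6 - Q^4) * (Q^6 - Q^5))"
  define B where "B = (Q^6 - 1) * (Q^6 - Q) * (Q^6 - Q^2) * (Q^6 - Q^3) * (Q^6 - Q^4) * (Q^6 - Q^5)"
  have D: "D \<noteq> 0" unfolding D_def using d1 d2 by simp
  have g: "gauss_5_2 q * D = (Q^5 - 1) * (Q^4 - 1)" unfolding gauss_5_2_def Q_def[symmetric] D_def
    using D unfolding D_def by simp
  have "(gauss_5_2 q * X) * D = (gauss_5_2 q * D) * X" by (simp only: ac_simps)
  also have "\<dots> = ((Q^5 - 1) * (Q^4 - 1)) * X" by (simp only: g)
  also have "\<dots> = B * D" using key unfolding B_def D_def X_def by simp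
  finally have "gauss_5_2 q * X = B" using D by simp
  then show ?thesis unfolding Q_def[symmetric] X_def B_def .
qed

lemma ekr_core:
  fixes H :: "('a::{field,finite} ^ 'n) set" and F :: "('a ^ 'n) set set"
  assumes H: "vec.subspace H" and cH: "card H = CARD('a) ^ 6"
    and FE: "\<forall>E\<in>F. vec.subspace E \<and> E \<subseteq> H \<and> card E = CARD('a) ^ 3"
    and FF: "\<forall>E\<in>F. \<forall>E'\<in>F. E \<inter> E' \<noteq> {0}"
  shows "real (card F) \<le> gauss_5_2 CARD('a)"
proof -
  obtain f :: "'a poly" where f: "degree f = 3" "prime_elem f" using exists_prime_cubic by blast
  define q where "q = CARD('a)"
  have q2: "2 \<le> q" unfolding q_def by (rule card_field_ge2)
  define Bs where "Bs = Tup (\<lambda>_. H) 6"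
  have finB: "finite Bs" unfolding Bs_def by (rule finite_Tup)
  have finF: "finite F" by (rule finite)
  have "(\<Sum>b\<in>Bs. card {E \<in> F. E \<in> Kf f b}) \<le> (\<Sum>b\<in>Bs. 1)"
    by (rule sum_mono) (use at_most_one[OF f _ _ FF] FE in \<open>auto simp: Bs_def\<close>)
  also have "\<dots> = card Bs" by simp
  also have "\<dots> = (\<Prod>i<6. q ^ 6 - q ^ i)" unfolding Bs_def q_def by (rule card_Bases[OF H cH])
  finally have ineq1: "(\<Sum>b\<in>Bs. card {E \<in> F. E \<in> Kf f b}) \<le> (\<Prod>i<6. q ^ 6 - q ^ i)" .
  have "(\<Sum>b\<in>Bs. card {E \<in> F. E \<in> Kf f b}) = (\<Sum>E\<in>F. card {b \<in> Bs. E \<in> Kf f b})"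
    by (rule double_count[OF finB finF])
  also have "\<dots> = (\<Sum>E\<in>F. (q ^ 3 + 1) * c0 q)"
    by (rule sum.cong) (use FE fiber_card[OF f H _ _ _ cH] in \<open>auto simp: Bs_def q_def\<close>)
  also have "\<dots> = card F * ((q ^ 3 + 1) * c0 q)" by simp
  finally have ineq: "card F * ((q ^ 3 + 1) * c0 q) \<le> (\<Prod>i<6. q ^ 6 - q ^ i)" using ineq1 by simp
  define Q where "Q = real q"
  have rp: "real (q ^ a - q ^ b) = Q ^ a - Q ^ b" if "b \<le> a" for a b
    unfolding Q_def using real_pow_diff[OF that, of q] q2 by simp
  have rB: "real (\<Prod>i<6. q ^ 6 - q ^ i) = (Q^6 - 1) * (Q^6 - Q) * (Q^6 - Q^2) * (Q^6 - Q^3) * (Q^6 - Q^4) * (Q^6 - Q^5)"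
  proof -
    have "real (\<Prod>i<6. q ^ 6 - q ^ i) = (\<Prod>i<6. real (q ^ 6 - q ^ i))" by simp
    also have "\<dots> = (\<Prod>i<6. Q ^ 6 - Q ^ i)" by (rule prod.cong) (auto intro: rp)
    also have "\<dots> = (Q^6 - 1) * (Q^6 - Q) * (Q^6 - Q^2) * (Q^6 - Q^3) * (Q^6 - Q^4) * (Q^6 - Q^5)"
      by (simp add: eval_nat_numeral)
    finally show ?thesis .
  qed
  have rC: "real (c0 q) = (Q^3 - 1) * (Q^3 - Q) * (Q^3 - Q^2) * (Q^6 - Q^3) * (Q^6 - Q^4) * (Q^6 - Q^5)"
  proof -
    have "real (c0 q) = real (q^3 - q^0) * real (q^3 - q^1) * real (q^3 - q^2) * real (q^6 - q^3) * real (q^6 - q^4) * real (q^6 - q^5)"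
      unfolding c0_def by simp
    then show ?thesis using rp[of 0 3] rp[of 1 3] rp[of 2 3] rp[of 3 6] rp[of 4 6] rp[of 5 6] by simp
  qed
  have Q2: "Q \<ge> 2" unfolding Q_def using q2 by simp
  have pos: "(Q^3 + 1) * ((Q^3 - 1) * (Q^3 - Q) * (Q^3 - Q^2) * (Q^6 - Q^3) * (Q^6 - Q^4) * (Q^6 - Q^5)) > 0"
  proof -
    have h: "Q ^ b < Q ^ a" if "b < a" for a b using that Q2 by (intro power_strict_increasing) auto
    have "Q^0 < Q^3" "Q^1 < Q^3" "Q^2 < Q^3" "Q^3 < Q^6" "Q^4 < Q^6" "Q^5 < Q^6"
      by (rule h, simp)+
    moreover have "Q^3 + 1 > 0" using Q2 by (simp add: add_pos_pos)
    ultimately show ?thesis by (simp add: mult_pos_pos)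
  qed
  have l1: "real (card F * ((q ^ 3 + 1) * c0 q)) \<le> real (\<Prod>i<6. q ^ 6 - q ^ i)"
    using ineq by (simp only: of_nat_le_iff)
  have l2: "real (card F * ((q ^ 3 + 1) * c0 q)) = real (card F) * ((Q^3 + 1) * real (c0 q))"
    unfolding Q_def by (simp only: of_nat_mult of_nat_add of_nat_power of_nat_1)
  have "real (card F) * ((Q^3 + 1) * real (c0 q)) \<le> real (\<Prod>i<6. q ^ 6 - q ^ i)"
    using l1 unfolding l2 .
  then have "real (card F) * ((Q^3 + 1) * ((Q^3 - 1) * (Q^3 - Q) * (Q^3 - Q^2) * (Q^6 - Q^3) * (Q^6 - Q^4) * (Q^6 - Q^5)))
      \<le> (Q^6 - 1) * (Q^6 - Q) * (Q^6 - Q^2) * (Q^6 - Q^3) * (Q^6 - Q^4) * (Q^6 - Q^5)"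
    by (simp only: rB rC)
  also have "\<dots> = gauss_5_2 q * ((Q^3 + 1) * ((Q^3 - 1) * (Q^3 - Q) * (Q^3 - Q^2) * (Q^6 - Q^3) * (Q^6 - Q^4) * (Q^6 - Q^5)))"
    unfolding Q_def by (rule gauss_identity[OF q2, symmetric])
  finally have "real (card F) \<le> gauss_5_2 q" using pos by (simp only: mult_le_cancel_right_pos)
  then show ?thesis unfolding q_def .
qed

lemma plane_facts:
  fixes E :: "('a::{field,finite} ^ 7) set"
  assumes "is_plane E" shows "vec.subspace E" "card E = CARD('a) ^ 3"
  using assms card_subspace[of E] unfolding proj_sub_def by auto

lemma complement:
  fixes p0 :: "'a::{field,finite} ^ 7"
  assumes p0: "p0 \<noteq> 0"
  obtains H' where "vec.subspace H'" "card H' = CARD('a) ^ 6" "p0 \<notin> H'" "\<forall>v. \<exists>k. v - k *s p0 \<in> H'"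
proof -
  have "vec.independent {p0}" using p0 by (simp add: vec.independent_insert)
  then obtain Bf where Bf: "{p0} \<subseteq> Bf" "vec.independent Bf" "UNIV \<subseteq> vec.span Bf"
    by (rule vec.maximal_independent_subset_extend[of "{p0}" UNIV, OF subset_UNIV])
  have "vec.dim (UNIV :: ('a ^ 7) set) = card Bf"
    by (rule vec.dim_eq_card) (use Bf in auto)
  then have cB: "card Bf = 7" by (simp add: card_cart_basis)
  define H' where "H' = vec.span (Bf - {p0})"
  have fB: "finite Bf" by simp
  have ind: "vec.independent (Bf - {p0})" by (rule vec.independent_mono[OF Bf(2)]) auto
  have "vec.dim H' = card (Bf - {p0})" unfolding H'_def by (rule vec.dim_span_eq_card_independent[OF ind])
  also have "\<dots> = 6" using cB Bf(1) fB by (simp add: card_Diff_singleton)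
  finally have dH: "vec.dim H' = 6" .
  have sH: "vec.subspace H'" unfolding H'_def by simp
  have "card H' = CARD('a) ^ 6" using card_subspace[OF sH] dH by simp
  moreover have "p0 \<notin> H'"
  proof
    assume "p0 \<in> H'"
    then have "vec.dependent Bf" unfolding vec.dependent_def H'_def using Bf(1) by blast
    then show False using Bf(2) by simp
  qed
  moreover have "\<forall>v. \<exists>k. v - k *s p0 \<in> H'"
  proof
    fix v
    have "Bf = insert p0 (Bf - {p0})" using Bf(1) by auto
    then have "v \<in> vec.span (insert p0 (Bf - {p0}))" using Bf(3) by auto
    then show "\<exists>k. v - k *s p0 \<in> H'" unfolding H'_def vec.span_breakdown_eq .
  qed
  ultimately show ?thesis using sH that by blast
qed

lemma point_gen:
  fixes P :: "('a::{field,finite} ^ 7) set"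
  assumes "is_point P"
  obtains p0 where "p0 \<noteq> 0" "P = range (\<lambda>k. k *s p0)"
proof -
  have sP: "vec.subspace P" and dP: "vec.dim P = 1" using assms unfolding proj_sub_def by auto
  obtain B where B: "B \<subseteq> P" "vec.independent B" "P \<subseteq> vec.span B" "card B = vec.dim P"
    using vec.basis_exists by blast
  obtain p0 where Bp: "B = {p0}" using B(4) dP card_1_singletonE by metis
  have "p0 \<noteq> 0" using B(2) Bp vec.dependent_zero by blast
  moreover have "vec.span B = P" by (rule vec.span_subspace) (use B sP in auto)
  then have "P = range (\<lambda>k. k *s p0)" using Bp vec.span_singleton[of p0] by simp
  ultimately show ?thesis using that by blast
qed

lemma solid_facts:
  fixes S :: "('a::{field,finite} ^ 7) set"
  assumes "is_solid S" shows "vec.subspace S" "card S = CARD('a) ^ 4"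
  using assms card_subspace[of S] unfolding proj_sub_def by auto

theorem lemma3p1:
  fixes C :: "(('a::{field,finite} ^ 7) set \<times> ('a ^ 7) set) set"
    and H P :: "('a ^ 7) set"
  assumes "indep_flag_set C"
    and "is_hyperplane H"
    and "is_point P"
  shows "(let \<E> = {E. is_plane E \<and> E \<subseteq> H \<and> (\<exists>S. (E, S) \<in> C \<and> E = H \<inter> S)} in
           (\<forall>E\<in>\<E>. \<forall>E'\<in>\<E>. \<not> proj_disjoint E E') \<and>
           real (card \<E>) \<le> gauss_5_2 CARD('a))
       \<and> real (card {S. \<exists>E. (E, S) \<in> C \<and> P \<subseteq> S \<and> \<not> P \<subseteq> E}) \<le> gauss_5_2 CARD('a)"
proof -
  have flags: "\<And>E S. (E, S) \<in> C \<Longrightarrow> is_plane E \<and> is_solid S \<and> E \<subseteq> S"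
    using assms(1) unfolding indep_flag_set_def flag23_def by fastforce
  have noadj: "\<And>X Y. X \<in> C \<Longrightarrow> Y \<in> C \<Longrightarrow> \<not> kneser_flag_adj X Y"
    using assms(1) unfolding indep_flag_set_def by blast
  have sH: "vec.subspace H" and cH: "card H = CARD('a) ^ 6"
    using assms(2) card_subspace[of H] unfolding proj_sub_def by auto
  define \<E> where "\<E> = {E. is_plane E \<and> E \<subseteq> H \<and> (\<exists>S. (E, S) \<in> C \<and> E = H \<inter> S)}"
  have inter: "\<forall>E\<in>\<E>. \<forall>E'\<in>\<E>. E \<inter> E' \<noteq> {0}"
  proof (intro ballI notI)
    fix E E' assume E: "E \<in> \<E>" and E': "E' \<in> \<E>" and d: "E \<inter> E' = {0}"
    obtain S where S: "(E, S) \<in> C" "E = H \<inter> S" "E \<subseteq> H" "is_plane E" using E unfolding \<E>_def by auto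
    obtain S' where S': "(E', S') \<in> C" "E' = H \<inter> S'" "E' \<subseteq> H" "is_plane E'" using E' unfolding \<E>_def by auto
    have sE: "vec.subspace E" "vec.subspace E'" using S(4) S'(4) plane_facts by auto
    have sS: "vec.subspace S" "vec.subspace S'" using flags[OF S(1)] flags[OF S'(1)] solid_facts by auto
    have 1: "E \<inter> S' = {0}"
    proof
      show "E \<inter> S' \<subseteq> {0}" using d S(3) S'(2) by blast
      show "{0} \<subseteq> E \<inter> S'" using sE sS vec.subspace_0 by auto
    qed
    have 2: "E' \<inter> S = {0}"
    proof
      show "E' \<inter> S \<subseteq> {0}" using d S'(3) S(2) by blast
      show "{0} \<subseteq> E' \<inter> S" using sE sS vec.subspace_0 by auto
    qed
    have "E \<noteq> E'"
    proof
      assume "E = E'"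
      then have "E = {0}" using d by simp
      then show False using nonzero_elem[OF plane_facts(2)[OF S(4)]] by auto
    qed
    then have "kneser_flag_adj (E, S) (E', S')"
      unfolding kneser_flag_adj_def proj_disjoint_def using 1 2 by auto
    then show False using noadj S(1) S'(1) by blast
  qed
  have part1: "real (card \<E>) \<le> gauss_5_2 CARD('a)"
    by (rule ekr_core[OF sH cH _ inter]) (auto simp: \<E>_def plane_facts)
  obtain p0 where p0: "p0 \<noteq> 0" "P = range (\<lambda>k. k *s p0)" using point_gen[OF assms(3)] by blast
  obtain H' where H': "vec.subspace H'" "card H' = CARD('a) ^ 6" "p0 \<notin> H'" "\<forall>v. \<exists>k. v - k *s p0 \<in> H'"
    using complement[OF p0(1)] by blast
  have p0P: "p0 \<in> P" using p0(2) by (metis rangeI vec.scale_one)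
  define SS where "SS = {S. \<exists>E. (E, S) \<in> C \<and> P \<subseteq> S \<and> \<not> P \<subseteq> E}"
  have decomp: "\<exists>k. v - k *s p0 \<in> S \<inter> H'" if "vec.subspace S" "p0 \<in> S" "v \<in> S" for S v
  proof -
    obtain k where "v - k *s p0 \<in> H'" using H'(4) by blast
    moreover have "v - k *s p0 \<in> S" using that by (simp add: vec.subspace_diff vec.subspace_scale)
    ultimately show ?thesis by blast
  qed
  have cSH: "card (S \<inter> H') = CARD('a) ^ 3" if S: "is_solid S" "P \<subseteq> S" for S
  proof -
    have sS: "vec.subspace S" and cS: "card S = CARD('a) ^ 4" using solid_facts[OF S(1)] by auto
    have pS: "p0 \<in> S" using p0P S(2) by auto
    have "bij_betw (\<lambda>(h, k). h + k *s p0) ((S \<inter> H') \<times> (UNIV :: 'a set)) S"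
    proof (rule bij_betw_imageI)
      show "inj_on (\<lambda>(h, k). h + k *s p0) ((S \<inter> H') \<times> (UNIV :: 'a set))"
      proof (rule inj_onI, clarsimp)
        fix h k h' k' assume h: "h \<in> S" "h \<in> H'" and h': "h' \<in> S" "h' \<in> H'" and e: "h + k *s p0 = h' + k' *s p0"
        have "(k - k') *s p0 = h' - h" using e by (simp add: vec.scale_left_diff_distrib algebra_simps)
        moreover have "h' - h \<in> H'" using h h' H'(1) by (simp add: vec.subspace_diff)
        ultimately have kk: "k = k'"
        proof (cases "k = k'")
          case False
          assume a: "(k - k') *s p0 = h' - h" "h' - h \<in> H'"
          have "inverse (k - k') * (k - k') = 1" using False by simp
          then have "p0 = inverse (k - k') *s ((k - k') *s p0)" by (simp only: vec.scale_scale vec.scale_one)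
          then have "p0 \<in> H'" using a H'(1) by (metis vec.subspace_scale)
          then show ?thesis using H'(3) by simp
        qed
        then show "h = h' \<and> k = k'" using e by simp
      qed
      show "(\<lambda>(h, k). h + k *s p0) ` ((S \<inter> H') \<times> (UNIV :: 'a set)) = S"
      proof
        show "(\<lambda>(h, k). h + k *s p0) ` ((S \<inter> H') \<times> (UNIV :: 'a set)) \<subseteq> S"
          using sS pS by (auto intro: vec.subspace_add vec.subspace_scale)
        show "S \<subseteq> (\<lambda>(h, k). h + k *s p0) ` ((S \<inter> H') \<times> (UNIV :: 'a set))"
        proof
          fix v assume v: "v \<in> S"
          obtain k where k: "v - k *s p0 \<in> S \<inter> H'" using decomp[OF sS pS v] by blast
          have "v = (\<lambda>(h, k). h + k *s p0) (v - k *s p0, k)" by simp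
          then show "v \<in> (\<lambda>(h, k). h + k *s p0) ` ((S \<inter> H') \<times> (UNIV :: 'a set))"
            using k by blast
        qed
      qed
    qed
    then have "card S = card ((S \<inter> H') \<times> (UNIV :: 'a set))" by (simp add: bij_betw_same_card)
    then have "CARD('a) ^ 4 = card (S \<inter> H') * CARD('a)" using cS by (simp add: card_cartesian_product)
    then have "CARD('a) ^ 3 * CARD('a) = card (S \<inter> H') * CARD('a)" by (simp add: power_Suc2 eval_nat_numeral)
    then show ?thesis by simp
  qed
  have SSfacts: "\<exists>E. (E, S) \<in> C \<and> P \<subseteq> S \<and> \<not> P \<subseteq> E \<and> is_plane E \<and> is_solid S \<and> E \<subseteq> S" if "S \<in> SS" for S
    using that flags unfolding SS_def by blast
  have injphi: "inj_on (\<lambda>S. S \<inter> H') SS"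
  proof (rule inj_onI)
    fix S S' assume S: "S \<in> SS" and S': "S' \<in> SS" and e: "S \<inter> H' = S' \<inter> H'"
    have sub: "X \<subseteq> Y" if X: "X \<in> SS" and Y: "Y \<in> SS" and e: "X \<inter> H' = Y \<inter> H'" for X Y
    proof
      fix v assume v: "v \<in> X"
      obtain E where "P \<subseteq> X" "is_solid X" using SSfacts[OF X] by blast
      then have sX: "vec.subspace X" and pX: "p0 \<in> X" using solid_facts p0P by auto
      obtain E' where "P \<subseteq> Y" "is_solid Y" using SSfacts[OF Y] by blast
      then have sY: "vec.subspace Y" and pY: "p0 \<in> Y" using solid_facts p0P by auto
      obtain k where k: "v - k *s p0 \<in> X \<inter> H'" using decomp[OF sX pX v] by blast
      then have "v - k *s p0 \<in> Y" using e by auto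
      then have "(v - k *s p0) + k *s p0 \<in> Y" by (rule vec.subspace_add[OF sY _ vec.subspace_scale[OF sY pY]])
      then show "v \<in> Y" by simp
    qed
    show "S = S'" using sub[OF S S' e] sub[OF S' S e[symmetric]] by auto
  qed
  have inter2: "\<forall>X\<in>(\<lambda>S. S \<inter> H') ` SS. \<forall>Y\<in>(\<lambda>S. S \<inter> H') ` SS. X \<inter> Y \<noteq> {0}"
  proof (intro ballI notI)
    fix X Y assume X: "X \<in> (\<lambda>S. S \<inter> H') ` SS" and Y: "Y \<in> (\<lambda>S. S \<inter> H') ` SS" and d: "X \<inter> Y = {0}"
    obtain S where S: "S \<in> SS" "X = S \<inter> H'" using X by blast
    obtain S' where S': "S' \<in> SS" "Y = S' \<inter> H'" using Y by blast
    obtain E where E: "(E, S) \<in> C" "P \<subseteq> S" "\<not> P \<subseteq> E" "is_plane E" "is_solid S" "E \<subseteq> S"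
      using SSfacts[OF S(1)] by blast
    obtain E' where E': "(E', S') \<in> C" "P \<subseteq> S'" "\<not> P \<subseteq> E'" "is_plane E'" "is_solid S'" "E' \<subseteq> S'"
      using SSfacts[OF S'(1)] by blast
    have sS: "vec.subspace S" "vec.subspace S'" using E(5) E'(5) solid_facts by auto
    have sE: "vec.subspace E" "vec.subspace E'" using E(4) E'(4) plane_facts by auto
    have pS: "p0 \<in> S" "p0 \<in> S'" using E(2) E'(2) p0P by auto
    have SSP: "v \<in> P" if "v \<in> S" "v \<in> S'" for v
    proof -
      obtain k where k: "v - k *s p0 \<in> H'" using H'(4) by blast
      have "v - k *s p0 \<in> S" "v - k *s p0 \<in> S'" using that sS pS
        by (simp_all add: vec.subspace_diff vec.subspace_scale)
      then have "v - k *s p0 \<in> X \<inter> Y" using k S(2) S'(2) by auto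
      then have "v = k *s p0" using d by simp
      then show "v \<in> P" unfolding p0(2) by (rule image_eqI) simp
    qed
    have EP: "w = 0" if wP: "w \<in> P" and wF: "w \<in> F" and sF: "vec.subspace F" and nPF: "\<not> P \<subseteq> F" for w F
    proof (rule ccontr)
      assume w0: "w \<noteq> 0"
      obtain k where k: "w = k *s p0" using wP p0(2) by auto
      then have "k \<noteq> 0" using w0 by auto
      then have "p0 = inverse k *s w" using k by simp
      then have pF: "p0 \<in> F" using wF sF by (metis vec.subspace_scale)
      have "P \<subseteq> F"
      proof
        fix x assume "x \<in> P"
        then obtain c where "x = c *s p0" using p0(2) by auto
        then show "x \<in> F" using vec.subspace_scale[OF sF pF] by simp
      qed
      then show False using nPF by simp
    qed
    have 1: "E \<inter> S' = {0}"
    proof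
      show "E \<inter> S' \<subseteq> {0}" using SSP EP[OF _ _ sE(1) E(3)] E(6) by blast
      show "{0} \<subseteq> E \<inter> S'" using sE sS vec.subspace_0 by auto
    qed
    have 2: "E' \<inter> S = {0}"
    proof
      show "E' \<inter> S \<subseteq> {0}" using SSP EP[OF _ _ sE(2) E'(3)] E'(6) by blast
      show "{0} \<subseteq> E' \<inter> S" using sE sS vec.subspace_0 by auto
    qed
    have "S \<noteq> S'"
    proof
      assume "S = S'"
      then have "S \<inter> H' = {0}" using d S(2) S'(2) by simp
      then show False using nonzero_elem[OF cSH[OF E(5) E(2)]] by auto
    qed
    then have "kneser_flag_adj (E, S) (E', S')"
      unfolding kneser_flag_adj_def proj_disjoint_def using 1 2 by auto
    then show False using noadj E(1) E'(1) by blast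
  qed
  have "real (card ((\<lambda>S. S \<inter> H') ` SS)) \<le> gauss_5_2 CARD('a)"
  proof (rule ekr_core[OF H'(1,2) _ inter2], intro ballI conjI)
    fix X assume "X \<in> (\<lambda>S. S \<inter> H') ` SS"
    then obtain S where S: "S \<in> SS" "X = S \<inter> H'" by blast
    obtain E where E: "P \<subseteq> S" "is_solid S" using SSfacts[OF S(1)] by blast
    show "vec.subspace X" using S(2) solid_facts(1)[OF E(2)] H'(1) by (simp add: vec.subspace_inter)
    show "X \<subseteq> H'" using S(2) by auto
    show "card X = CARD('a) ^ 3" using S(2) cSH[OF E(2) E(1)] by simp
  qed
  then have part2: "real (card SS) \<le> gauss_5_2 CARD('a)" using card_image[OF injphi] by simp
  show ?thesis
    unfolding Let_def \<E>_def[symmetric] SS_def[symmetric] proj_disjoint_def using inter part1 part2 by blast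
qed

end
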